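(* Let $\epsilon>0$ and let $\Delta\ge 1$ be an integer. There exists a deterministic distributed algorithm (in the synchronous port-numbering model described in the context) which, on every edge-weighted bicoloured graph of maximum degree at most $\Delta$ with positive edge weights, terminates after $T\le 4+2\Delta/\epsilon$ synchronous communication steps and outputs a matching $M$ with $w(M^* )\le (2+\epsilon)\,w(M)$, where $M^*$ is a maximum-weight matching of the graph.
   Context: A bicoloured graph is a simple undirected bipartite graph $\mathcal{G}=(R\cup B,E)$ with red nodes $R$ and blue nodes $B$ (every edge joins a red and a blue node), without isolated nodes; $\Delta$ is its maximum degree. Each edge $e$ has a positive weight $w(e)$, and for a set of edges $F$, $w(F)=\sum_{e\in F}w(e)$. A matching is a set of edges no two sharing a node; a maximum-weight matching is one of maximum total weight. The preferences of each node are determined by the weights: a node prefers heavier incident edges (the heaviest edge is most preferred). Distributed model: $\mathcal{G}$ is the communication graph. Initially each node $v$ knows only its colour, its degree $d(v)$, and $T$; $v$ has $d(v)$ ports to its neighbours, numbered according to $v$'s preference order (i.e., by decreasing weight of the incident edges). There are no node identifiers. Computation is synchronous: in each step every node receives messages from neighbours, computes deterministically, and sends a message to each neighbour. After $T$ steps each node outputs its partner (if any), consistently, defining a matching. *)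

theory Defs
  imports Complex_Main
begin

text \<open>Nodes are natural numbers (they are anonymous to the algorithm); an undirected
edge is a two-element set of nodes. Colour: True = red, False = blue.\<close>

definition nbrs :: "nat set set \<Rightarrow> nat \<Rightarrow> nat set" where
  "nbrs E v = {u. {u, v} \<in> E}"

definition deg :: "nat set set \<Rightarrow> nat \<Rightarrow> nat" where
  "deg E v = card (nbrs E v)"

definition bicoloured_graph :: "nat set \<Rightarrow> nat set \<Rightarrow> nat set set \<Rightarrow> bool" where
  "bicoloured_graph V R E \<longleftrightarrow> finite V \<and> R \<subseteq> V \<and>
     E \<subseteq> {{r, b} | r b. r \<in> R \<and> b \<in> V - R} \<and> (\<forall>v\<in>V. nbrs E v \<noteq> {})"

definition is_matching :: "nat set set \<Rightarrow> nat set set \<Rightarrow> bool" where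
  "is_matching E M \<longleftrightarrow> M \<subseteq> E \<and> (\<forall>e\<in>M. \<forall>e'\<in>M. e \<noteq> e' \<longrightarrow> e \<inter> e' = {})"

definition max_weight_matching :: "nat set set \<Rightarrow> (nat set \<Rightarrow> real) \<Rightarrow> nat set set \<Rightarrow> bool" where
  "max_weight_matching E w M \<longleftrightarrow> is_matching E M \<and>
     (\<forall>M'. is_matching E M' \<longrightarrow> sum w M' \<le> sum w M)"

definition valid_ports :: "nat set \<Rightarrow> nat set set \<Rightarrow> (nat set \<Rightarrow> real) \<Rightarrow> (nat \<Rightarrow> nat \<Rightarrow> nat) \<Rightarrow> bool" where
  "valid_ports V E w port \<longleftrightarrow> (\<forall>v\<in>V. bij_betw (port v) {..<deg E v} (nbrs E v) \<and>
     (\<forall>i j. i < j \<longrightarrow> j < deg E v \<longrightarrow> w {v, port v j} \<le> w {v, port v i}))"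

definition back_port :: "nat set set \<Rightarrow> (nat \<Rightarrow> nat \<Rightarrow> nat) \<Rightarrow> nat \<Rightarrow> nat \<Rightarrow> nat" where
  "back_port E port u v = (THE j. j < deg E u \<and> port u j = v)"

text \<open>A deterministic anonymous distributed algorithm: initial state from colour and degree
(T is a constant of the algorithm), message sent on each port, state transition on the list
of messages received (indexed by port), and output (port of the partner, if any).\<close>
record ('s, 'm) dist_alg =
  a_init :: "bool \<Rightarrow> nat \<Rightarrow> 's"
  a_send :: "'s \<Rightarrow> nat \<Rightarrow> 'm"
  a_recv :: "'s \<Rightarrow> 'm list \<Rightarrow> 's"
  a_out  :: "'s \<Rightarrow> nat option"

fun run :: "('s, 'm) dist_alg \<Rightarrow> nat set \<Rightarrow> nat set set \<Rightarrow> (nat \<Rightarrow> nat \<Rightarrow> nat) \<Rightarrow> nat \<Rightarrow> nat \<Rightarrow> 's" where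
  "run A R E port 0 v = a_init A (v \<in> R) (deg E v)"
| "run A R E port (Suc t) v =
     a_recv A (run A R E port t v)
       (map (\<lambda>i. a_send A (run A R E port t (port v i)) (back_port E port (port v i) v))
            [0..<deg E v])"

definition consistent_output :: "('s, 'm) dist_alg \<Rightarrow> nat set \<Rightarrow> nat set \<Rightarrow> nat set set \<Rightarrow> (nat \<Rightarrow> nat \<Rightarrow> nat) \<Rightarrow> nat \<Rightarrow> bool" where
  "consistent_output A V R E port T \<longleftrightarrow> (\<forall>v\<in>V. \<forall>i. a_out A (run A R E port T v) = Some i \<longrightarrow>
     i < deg E v \<and> a_out A (run A R E port T (port v i)) = Some (back_port E port (port v i) v))"

definition output_matching :: "('s, 'm) dist_alg \<Rightarrow> nat set \<Rightarrow> nat set \<Rightarrow> nat set set \<Rightarrow> (nat \<Rightarrow> nat \<Rightarrow> nat) \<Rightarrow> nat \<Rightarrow> nat set set" where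
  "output_matching A V R E port T =
     {{v, port v i} | v i. v \<in> V \<and> a_out A (run A R E port T v) = Some i}"

end

theory Submission
  imports Defs
begin


definition col :: "nat \<Rightarrow> nat" where "col s = s mod 2"
definition par :: "nat \<Rightarrow> nat" where "par s = s div 2 mod 2"
definition xv :: "nat \<Rightarrow> nat" where "xv s = s div 4"
definition mk :: "nat \<Rightarrow> nat \<Rightarrow> nat \<Rightarrow> nat" where "mk c p x = 4*x + 2*p + c"

lemma mk_dec[simp]: "c < 2 \<Longrightarrow> p < 2 \<Longrightarrow> col (mk c p x) = c \<and> par (mk c p x) = p \<and> xv (mk c p x) = x"
  unfolding col_def par_def xv_def mk_def by presburger

definition msend :: "nat \<Rightarrow> nat \<Rightarrow> nat" where
  "msend s i = (if col s = 1 then (if par s = 0 \<and> xv s div 2 = i then 1 else 0)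
                else (if par s = 1 \<and> xv s = Suc i then 1 else 0))"

definition mrecv :: "nat \<Rightarrow> nat list \<Rightarrow> nat" where
  "mrecv s ms = (if col s = 1 then
      (if par s = 0 then mk 1 1 (xv s) else
        (if xv s div 2 < length ms \<and> ms ! (xv s div 2) = 1 then mk 1 0 (2 * (xv s div 2) + 1)
         else if xv s div 2 < length ms then mk 1 0 (2 * (xv s div 2 + 1))
         else mk 1 0 (2 * (xv s div 2))))
    else (if par s = 0 then mk 0 1 (if \<exists>i<length ms. ms ! i = 1 then Suc (LEAST i. i < length ms \<and> ms ! i = 1) else 0)
          else mk 0 0 (xv s)))"

definition minit :: "bool \<Rightarrow> nat \<Rightarrow> nat" where
  "minit c d = mk (if c then 1 else 0) 0 0"

definition mout :: "nat \<Rightarrow> nat option" where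
  "mout s = (if col s = 1 then (if odd (xv s) then Some (xv s div 2) else None)
             else (if xv s = 0 then None else Some (xv s - 1)))"

definition Alg :: "(nat, nat) dist_alg" where
  "Alg = \<lparr>a_init = minit, a_send = msend, a_recv = mrecv, a_out = mout\<rparr>"

lemma Alg_simps[simp]: "a_init Alg = minit" "a_send Alg = msend" "a_recv Alg = mrecv" "a_out Alg = mout"
  by (simp_all add: Alg_def)

locale setting =
  fixes V R :: "nat set" and E :: "nat set set" and w :: "nat set \<Rightarrow> real" and port :: "nat \<Rightarrow> nat \<Rightarrow> nat" and \<Delta> :: nat
  assumes bg: "bicoloured_graph V R E" and degb: "\<forall>v\<in>V. deg E v \<le> \<Delta>" and wpos: "\<forall>e\<in>E. w e > 0"
    and vp: "valid_ports V E w port"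
begin

abbreviation "bp \<equiv> back_port E port"
abbreviation "dg \<equiv> deg E"

lemma finV: "finite V" and RV: "R \<subseteq> V" using bg unfolding bicoloured_graph_def by auto

lemma edgeD: "e \<in> E \<Longrightarrow> \<exists>r b. e = {r, b} \<and> r \<in> R \<and> b \<in> V \<and> b \<notin> R"
  using bg unfolding bicoloured_graph_def by blast

lemma nbrD: assumes "u \<in> nbrs E v" shows "u \<in> V \<and> v \<in> V \<and> (u \<in> R \<longleftrightarrow> v \<notin> R) \<and> {u, v} \<in> E"
proof -
  have e: "{u,v} \<in> E" using assms unfolding nbrs_def by auto
  from edgeD[OF e] obtain r b where "{u,v} = {r,b}" "r \<in> R" "b \<in> V" "b \<notin> R" by blast
  then show ?thesis using e RV by (auto simp: doubleton_eq_iff)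
qed

lemma nbrs_sym: "u \<in> nbrs E v \<longleftrightarrow> v \<in> nbrs E u"
  unfolding nbrs_def by (simp add: insert_commute)

lemma port_bij: "v \<in> V \<Longrightarrow> bij_betw (port v) {..<dg v} (nbrs E v)"
  using vp unfolding valid_ports_def by auto

lemma port_order: "v \<in> V \<Longrightarrow> i \<le> j \<Longrightarrow> j < dg v \<Longrightarrow> w {v, port v j} \<le> w {v, port v i}"
  using vp unfolding valid_ports_def by (cases "i = j") auto

lemma port_nbr: "v \<in> V \<Longrightarrow> i < dg v \<Longrightarrow> port v i \<in> nbrs E v"
  using port_bij bij_betwE by blast

lemma port_inj: "v \<in> V \<Longrightarrow> i < dg v \<Longrightarrow> j < dg v \<Longrightarrow> port v i = port v j \<Longrightarrow> i = j"
  using port_bij[of v] unfolding bij_betw_def inj_on_def by auto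

lemma bp_port: assumes "v \<in> V" "i < dg v" shows "bp v (port v i) = i"
  unfolding back_port_def using assms port_inj by (auto intro!: the_equality)

lemma bp_nbr: assumes "v \<in> V" "u \<in> nbrs E v" shows "bp v u < dg v \<and> port v (bp v u) = u"
proof -
  obtain i where "i < dg v" "port v i = u" using port_bij[OF assms(1)] assms(2)
    unfolding bij_betw_def by (metis imageE lessThan_iff)
  then show ?thesis using bp_port[OF assms(1)] by auto
qed

lemma port_edge: "v \<in> V \<Longrightarrow> i < dg v \<Longrightarrow> {v, port v i} \<in> E"
  using port_nbr nbrD by (metis insert_commute)

lemma port_V: "v \<in> V \<Longrightarrow> i < dg v \<Longrightarrow> port v i \<in> V \<and> (port v i \<in> R \<longleftrightarrow> v \<notin> R)"
  using port_nbr nbrD by blast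

lemma finite_nbrs: "finite (nbrs E v)"
  using finV nbrD by (metis finite_subset subsetI)

abbreviation "st t v \<equiv> run Alg R E port t v"

lemma col_par: "v \<in> V \<Longrightarrow> col (st t v) = (if v \<in> R then 1 else 0) \<and> par (st t v) = t mod 2"
proof (induction t)
  case 0 then show ?case by (simp add: minit_def)
next
  case (Suc t)
  then show ?case by (auto simp: mrecv_def Let_def mod_Suc)
qed


definition "ptr k r = xv (st (2*k) r) div 2"
definition "held k r = odd (xv (st (2*k) r))"
definition "hx k b = xv (st (2*k) b)"

lemma st_Suc: "st (Suc t) v = mrecv (st t v) (map (\<lambda>i. msend (st t (port v i)) (bp (port v i) v)) [0..<dg v])"
  by simp

lemma msg_red: assumes "b \<in> V" "b \<notin> R" "i < dg b"
  shows "msend (st (2*k) (port b i)) (bp (port b i) b) = 1 \<longleftrightarrow> ptr k (port b i) = bp (port b i) b"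
proof -
  have "port b i \<in> V" "port b i \<in> R" using port_V assms by auto
  then show ?thesis using col_par[of "port b i" "2*k"] unfolding msend_def ptr_def by auto
qed

lemma msg_blue: assumes "r \<in> R" "i < dg r"
  shows "msend (st (Suc (2*k)) (port r i)) (bp (port r i) r) = 1 \<longleftrightarrow> xv (st (Suc (2*k)) (port r i)) = Suc (bp (port r i) r)"
proof -
  have "r \<in> V" using assms RV by auto
  then have "port r i \<in> V" "port r i \<notin> R" using port_V assms by auto
  then show ?thesis using col_par[of "port r i" "Suc (2*k)"] unfolding msend_def by auto
qed

lemma red_odd: assumes "r \<in> R" shows "xv (st (Suc (2*k)) r) = xv (st (2*k) r)"
proof -
  have "r \<in> V" using assms RV by auto
  then have "col (st (2*k) r) = 1" "par (st (2*k) r) = 0" using col_par[of r "2*k"] assms by auto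
  then show ?thesis unfolding st_Suc[of "2*k"] mrecv_def by (simp del: run.simps)
qed

lemma two_Suc: "2 * Suc k = Suc (Suc (2*k))" by simp

lemma blue_even: assumes "b \<in> V" "b \<notin> R" shows "hx (Suc k) b = xv (st (Suc (2*k)) b)"
proof -
  have "col (st (Suc (2*k)) b) = 0" "par (st (Suc (2*k)) b) = 1" using col_par[of b "Suc (2*k)"] assms by auto
  then show ?thesis unfolding hx_def two_Suc st_Suc[of "Suc (2*k)"] mrecv_def by simp
qed

lemma blue_step: assumes "b \<in> V" "b \<notin> R"
  shows "hx (Suc k) b = (if \<exists>i<dg b. ptr k (port b i) = bp (port b i) b
      then Suc (LEAST i. i < dg b \<and> ptr k (port b i) = bp (port b i) b) else 0)"
proof -
  define ms where "ms = map (\<lambda>i. msend (st (2*k) (port b i)) (bp (port b i) b)) [0..<dg b]"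
  have len: "length ms = dg b" unfolding ms_def by simp
  have m: "i < dg b \<Longrightarrow> ms ! i = 1 \<longleftrightarrow> ptr k (port b i) = bp (port b i) b" for i
    unfolding ms_def using msg_red[OF assms] by simp
  have e: "(\<exists>i<length ms. ms ! i = 1) = (\<exists>i<dg b. ptr k (port b i) = bp (port b i) b)"
    using m len by auto
  have l: "(LEAST i. i < length ms \<and> ms ! i = 1) = (LEAST i. i < dg b \<and> ptr k (port b i) = bp (port b i) b)"
    using m len by (intro arg_cong[where f=Least] ext) auto
  have "xv (st (Suc (2*k)) b) = (if \<exists>i<length ms. ms ! i = 1 then Suc (LEAST i. i < length ms \<and> ms ! i = 1) else 0)"
  proof -
    have "col (st (2*k) b) = 0" "par (st (2*k) b) = 0" using col_par[of b "2*k"] assms by auto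
    then show ?thesis unfolding ms_def st_Suc[of "2*k"] mrecv_def by (simp del: run.simps)
  qed
  then show ?thesis using blue_even[OF assms] e l by simp
qed

lemma red_step: assumes "r \<in> R"
  shows "xv (st (2 * Suc k) r) = (if ptr k r < dg r \<and> hx (Suc k) (port r (ptr k r)) = Suc (bp (port r (ptr k r)) r)
     then 2 * ptr k r + 1 else if ptr k r < dg r then 2 * (ptr k r + 1) else 2 * ptr k r)"
proof -
  have rV: "r \<in> V" using assms RV by auto
  define ms where "ms = map (\<lambda>i. msend (st (Suc (2*k)) (port r i)) (bp (port r i) r)) [0..<dg r]"
  have len: "length ms = dg r" unfolding ms_def by simp
  have m: "i < dg r \<Longrightarrow> ms ! i = 1 \<longleftrightarrow> hx (Suc k) (port r i) = Suc (bp (port r i) r)" for i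
    unfolding ms_def using msg_blue[OF assms] blue_even port_V[OF rV] assms by simp
  have "2 * Suc k = Suc (Suc (2*k))" by simp
  moreover have c: "col (st (Suc (2*k)) r) = 1" "par (st (Suc (2*k)) r) = 1" using col_par[of r "Suc (2*k)"] assms rV by auto
  have "xv (st (Suc (Suc (2*k))) r) = (if xv (st (Suc (2*k)) r) div 2 < length ms \<and> ms ! (xv (st (Suc (2*k)) r) div 2) = 1 then 2 * (xv (st (Suc (2*k)) r) div 2) + 1
         else if xv (st (Suc (2*k)) r) div 2 < length ms then 2 * (xv (st (Suc (2*k)) r) div 2 + 1)
         else 2 * (xv (st (Suc (2*k)) r) div 2))"
    using c unfolding ms_def st_Suc[of "Suc (2*k)"] mrecv_def by (simp del: run.simps)
  ultimately show ?thesis using red_odd[OF assms] m len unfolding ptr_def by auto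
qed

end


context setting begin

lemma st0: "v \<in> V \<Longrightarrow> xv (st 0 v) = 0"
  by (simp add: minit_def)

lemma ptr0: "v \<in> V \<Longrightarrow> ptr 0 v = 0" and held0: "v \<in> V \<Longrightarrow> \<not> held 0 v" and hx0: "v \<in> V \<Longrightarrow> hx 0 v = 0"
  unfolding ptr_def held_def hx_def using st0 by auto

lemma held_Suc: assumes "r \<in> R"
  shows "held (Suc k) r \<longleftrightarrow> ptr k r < dg r \<and> hx (Suc k) (port r (ptr k r)) = Suc (bp (port r (ptr k r)) r)"
  using red_step[OF assms, of k] unfolding held_def by auto

lemma ptr_Suc: assumes "r \<in> R"
  shows "ptr (Suc k) r = (if ptr k r < dg r \<and> \<not> held (Suc k) r then ptr k r + 1 else ptr k r)"
  using red_step[OF assms, of k] held_Suc[OF assms, of k] unfolding ptr_def[of "Suc k"] by auto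

lemma ptr_le: assumes "r \<in> R" shows "ptr k r \<le> dg r"
proof (induction k)
  case 0 then show ?case using ptr0 assms RV by auto
next
  case (Suc k) then show ?case using ptr_Suc[OF assms, of k] by auto
qed

lemma ptr_mono1: "r \<in> R \<Longrightarrow> ptr k r \<le> ptr (Suc k) r"
  using ptr_Suc by auto

lemma ptr_mono: assumes "r \<in> R" "k \<le> k'" shows "ptr k r \<le> ptr k' r"
  using assms(2) by (induction rule: dec_induct) (use ptr_mono1[OF assms(1)] le_trans in blast)+

lemma held_ptr: assumes "r \<in> R" "held k r"
  shows "ptr k r < dg r \<and> hx k (port r (ptr k r)) = Suc (bp (port r (ptr k r)) r)"
proof (cases k)
  case 0 then show ?thesis using assms held0 RV by auto
next
  case (Suc k')
  have "ptr k r = ptr k' r" using ptr_Suc[OF assms(1), of k'] assms(2) Suc by auto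
  then show ?thesis using held_Suc[OF assms(1), of k'] assms(2) Suc by auto
qed

lemma red_port: assumes "r \<in> R" "i < dg r" shows "port r i \<in> V" "port r i \<notin> R" "r \<in> nbrs E (port r i)"
  using port_V[of r i] port_nbr[of r i] assms RV nbrs_sym by auto

lemma blue_port: assumes "b \<in> V" "b \<notin> R" "i < dg b" shows "port b i \<in> R" "b \<in> nbrs E (port b i)"
  using port_V[of b i] port_nbr[of b i] assms nbrs_sym by auto

lemma hold_inv: assumes "b \<in> V" "b \<notin> R" "hx k b = Suc i"
  shows "i < dg b \<and> held k (port b i) \<and> ptr k (port b i) = bp (port b i) b"
proof (cases k)
  case 0 then show ?thesis using assms hx0 by auto
next
  case (Suc k')
  let ?P = "\<lambda>i. i < dg b \<and> ptr k' (port b i) = bp (port b i) b"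
  have ex: "\<exists>i. ?P i" and ieq: "i = (LEAST i. ?P i)"
    using blue_step[OF assms(1,2), of k'] assms(3) Suc by (auto split: if_splits)
  have Pi: "?P i" using LeastI_ex[OF ex] ieq by simp
  define u where "u = port b i"
  have uR: "u \<in> R" and bu: "b \<in> nbrs E u" using blue_port[OF assms(1,2)] Pi u_def by auto
  have uV: "u \<in> V" using uR RV by auto
  have pu: "ptr k' u = bp u b" using Pi u_def by simp
  have pl: "ptr k' u < dg u" "port u (ptr k' u) = b" using bp_nbr[OF uV bu] pu by auto
  have bpi: "bp b u = i" using bp_port[OF assms(1)] Pi u_def by simp
  have hu: "held k u" using held_Suc[OF uR, of k'] pl bpi assms(3) Suc by simp
  have "ptr k u = ptr k' u" using ptr_Suc[OF uR, of k'] hu Suc by simp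
  then show ?thesis using Pi hu pu u_def by simp
qed

definition "hw k b = (case hx k b of 0 \<Rightarrow> 0 | Suc i \<Rightarrow> w {b, port b i})"

lemma hw_nonneg: assumes "b \<in> V" "b \<notin> R" shows "0 \<le> hw k b"
proof (cases "hx k b")
  case 0 then show ?thesis by (simp add: hw_def)
next
  case (Suc i)
  then have "i < dg b" using hold_inv[OF assms] by auto
  then show ?thesis using Suc port_edge[OF assms(1)] wpos by (auto simp: hw_def less_imp_le)
qed

lemma propose: assumes "r \<in> R" "ptr k r < dg r"
  shows "w {r, port r (ptr k r)} \<le> hw (Suc k) (port r (ptr k r)) \<and> hx (Suc k) (port r (ptr k r)) \<noteq> 0"
proof -
  define b where "b = port r (ptr k r)"
  have rV: "r \<in> V" using assms RV by auto
  have bV: "b \<in> V" "b \<notin> R" and rb: "r \<in> nbrs E b" using red_port[OF assms] b_def by auto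
  define i0 where "i0 = bp b r"
  have i0: "i0 < dg b" "port b i0 = r" using bp_nbr[OF bV(1) rb] i0_def by auto
  let ?P = "\<lambda>i. i < dg b \<and> ptr k (port b i) = bp (port b i) b"
  have P0: "?P i0" using i0 bp_port[OF rV assms(2)] b_def by simp
  then have hx: "hx (Suc k) b = Suc (LEAST i. ?P i)" using blue_step[OF bV, of k] by auto
  have le: "(LEAST i. ?P i) \<le> i0" using P0 by (rule Least_le)
  have "w {b, port b i0} \<le> w {b, port b (LEAST i. ?P i)}" using port_order[OF bV(1) le i0(1)] .
  then have "w {r, b} \<le> hw (Suc k) b" using i0 hx by (simp add: hw_def insert_commute)
  then show ?thesis using hx b_def by simp
qed

lemma hw_mono1: assumes "b \<in> V" "b \<notin> R" shows "hw k b \<le> hw (Suc k) b"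
proof (cases "hx k b")
  case 0 then show ?thesis using hw_nonneg[OF assms] by (simp add: hw_def)
next
  case (Suc i)
  define u where "u = port b i"
  have hi: "i < dg b" "held k u" "ptr k u = bp u b" using hold_inv[OF assms Suc] u_def by auto
  have uR: "u \<in> R" and bu: "b \<in> nbrs E u" using blue_port[OF assms hi(1)] u_def by auto
  have uV: "u \<in> V" using uR RV by auto
  have pl: "ptr k u < dg u" "port u (ptr k u) = b" using bp_nbr[OF uV bu] hi by auto
  have "w {u, b} \<le> hw (Suc k) b" using propose[OF uR pl(1)] pl by simp
  then show ?thesis using Suc u_def by (simp add: hw_def insert_commute)
qed

lemma hw_mono: assumes "b \<in> V" "b \<notin> R" "k \<le> k'" shows "hw k b \<le> hw k' b"
  using assms(3) by (induction rule: dec_induct) (use hw_mono1[OF assms(1,2)] order_trans in blast)+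

lemma passed: assumes "r \<in> R" "b \<in> nbrs E r" "bp r b < ptr k r" shows "w {r, b} \<le> hw k b"
  using assms(3)
proof (induction k)
  case 0 then show ?case using ptr0 assms RV by auto
next
  case (Suc k)
  have rV: "r \<in> V" using assms RV by auto
  have bV: "b \<in> V" "b \<notin> R" using nbrD[OF assms(2)] assms by auto
  have q: "bp r b < dg r" "port r (bp r b) = b" using bp_nbr[OF rV assms(2)] by auto
  show ?case
  proof (cases "bp r b < ptr k r")
    case True then show ?thesis using Suc.IH hw_mono1[OF bV, of k] by auto
  next
    case False
    then have "ptr k r = bp r b" using Suc.prems ptr_Suc[OF assms(1), of k] by (auto split: if_splits)
    then show ?thesis using propose[OF assms(1), of k] q by simp
  qed
qed

end


context setting begin

definition "Aw k r = (if held k r then hw k (port r (ptr k r)) else 0)"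
definition "bad k r = (if ptr k r < dg r \<and> \<not> held (Suc k) r then hw (Suc k) (port r (ptr k r)) else 0)"

lemma Aw_nonneg: assumes "r \<in> R" shows "0 \<le> Aw k r"
proof (cases "held k r")
  case True
  then have "ptr k r < dg r" using held_ptr[OF assms] by auto
  then show ?thesis using hw_nonneg red_port[OF assms] True by (simp add: Aw_def)
qed (simp add: Aw_def)

lemma bad_nonneg: assumes "r \<in> R" shows "0 \<le> bad k r"
  using hw_nonneg red_port[OF assms] by (simp add: bad_def)

lemma edge_bound: assumes "r \<in> R" "b \<in> nbrs E r"
  shows "w {r, b} \<le> Aw (Suc k) r + hw (Suc k) b + bad k r"
proof -
  have rV: "r \<in> V" using assms RV by auto
  have bV: "b \<in> V" "b \<notin> R" using nbrD[OF assms(2)] assms by auto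
  define q where "q = bp r b"
  have q: "q < dg r" "port r q = b" using bp_nbr[OF rV assms(2)] q_def by auto
  have A0: "0 \<le> Aw (Suc k) r" and B0: "0 \<le> bad k r" and H0: "0 \<le> hw (Suc k) b"
    using Aw_nonneg bad_nonneg hw_nonneg bV assms by auto
  show ?thesis
  proof (cases "q < ptr (Suc k) r")
    case True
    then have "w {r,b} \<le> hw (Suc k) b" using passed[OF assms] q_def by simp
    then show ?thesis using A0 B0 by linarith
  next
    case False
    show ?thesis
    proof (cases "held (Suc k) r")
      case True
      define P where "P = ptr (Suc k) r"
      have hp: "P < dg r" "hx (Suc k) (port r P) = Suc (bp (port r P) r)"
        using held_ptr[OF assms(1) True] P_def by auto
      have rn: "r \<in> nbrs E (port r P)" using red_port[OF assms(1) hp(1)] by simp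
      have pv: "port r P \<in> V" using red_port[OF assms(1) hp(1)] by simp
      have "port (port r P) (bp (port r P) r) = r" using bp_nbr[OF pv rn] by simp
      then have "Aw (Suc k) r = w {r, port r P}" using True hp P_def by (simp add: Aw_def hw_def insert_commute)
      moreover have "w {r, port r q} \<le> w {r, port r P}" using port_order[OF rV _ q(1)] False P_def by simp
      moreover have "w {r, b} = w {r, port r q}" using q by simp
      ultimately show ?thesis using B0 H0 by linarith
    next
      case nh: False
      have pk: "ptr k r < dg r"
      proof (rule ccontr)
        assume "\<not> ptr k r < dg r"
        then have "ptr (Suc k) r = dg r" using ptr_Suc[OF assms(1), of k] ptr_le[OF assms(1), of k] by auto
        then show False using False q by simp
      qed
      then have ps: "ptr (Suc k) r = ptr k r + 1" using ptr_Suc[OF assms(1), of k] nh by simp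
      have "bad k r = hw (Suc k) (port r (ptr k r))" using pk nh by (simp add: bad_def)
      moreover have "w {r, port r (ptr k r)} \<le> hw (Suc k) (port r (ptr k r))" using propose[OF assms(1) pk] by simp
      moreover have "w {r, port r q} \<le> w {r, port r (ptr k r)}" using port_order[OF rV _ q(1)] False ps by simp
      moreover have "w {r, b} = w {r, port r q}" using q by simp
      ultimately show ?thesis using A0 H0 by linarith
    qed
  qed
qed

abbreviation "Bl \<equiv> V - R"

lemma finR: "finite R" and finBl: "finite Bl" using finV RV finite_subset by auto

lemma sum_Aw: "(\<Sum>r\<in>R. Aw k r) \<le> (\<Sum>b\<in>Bl. hw k b)"
proof -
  define H where "H = {r \<in> R. held k r}"
  define g where "g r = port r (ptr k r)" for r
  have "(\<Sum>r\<in>R. Aw k r) = (\<Sum>r\<in>H. Aw k r)"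
    by (rule sum.mono_neutral_right) (auto simp: H_def Aw_def finR)
  also have "\<dots> = (\<Sum>r\<in>H. hw k (g r))" by (simp add: H_def Aw_def g_def)
  also have "\<dots> = (\<Sum>b\<in>g ` H. hw k b)"
  proof (rule sum.reindex[symmetric, unfolded comp_def])
    show "inj_on g H"
    proof (rule inj_onI)
      fix r1 r2 assume r1: "r1 \<in> H" and r2: "r2 \<in> H" and eq: "g r1 = g r2"
      have h1: "ptr k r1 < dg r1" "hx k (g r1) = Suc (bp (g r1) r1)" using held_ptr r1 by (auto simp: H_def g_def)
      have h2: "ptr k r2 < dg r2" "hx k (g r2) = Suc (bp (g r2) r2)" using held_ptr r2 by (auto simp: H_def g_def)
      have n1: "g r1 \<in> V" "r1 \<in> nbrs E (g r1)" using red_port h1 r1 by (auto simp: H_def g_def)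
      have n2: "r2 \<in> nbrs E (g r2)" using red_port h2 r2 by (auto simp: H_def g_def)
      have "bp (g r1) r1 = bp (g r1) r2" using h1 h2 eq by simp
      then show "r1 = r2" using bp_nbr[OF n1] bp_nbr[of "g r1" r2] n1 n2 eq by metis
    qed
  qed
  also have "\<dots> \<le> (\<Sum>b\<in>Bl. hw k b)"
  proof (rule sum_mono2[OF finBl])
    show "g ` H \<subseteq> Bl" using held_ptr red_port by (auto simp: H_def g_def)
    show "\<And>b. b \<in> Bl - g ` H \<Longrightarrow> 0 \<le> hw k b" using hw_nonneg by auto
  qed
  finally show ?thesis .
qed

lemma sum_bad: assumes "r \<in> R" shows "(\<Sum>k<K. bad k r) \<le> (\<Sum>i<dg r. hw K (port r i))"
proof -
  define J where "J = {k. k < K \<and> ptr k r < dg r \<and> \<not> held (Suc k) r}"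
  have "(\<Sum>k<K. bad k r) = (\<Sum>k\<in>J. bad k r)"
    by (rule sum.mono_neutral_right) (auto simp: J_def bad_def)
  also have "\<dots> \<le> (\<Sum>k\<in>J. hw K (port r (ptr k r)))"
  proof (rule sum_mono)
    fix k assume "k \<in> J"
    then show "bad k r \<le> hw K (port r (ptr k r))"
      using hw_mono red_port[OF assms] by (auto simp: J_def bad_def)
  qed
  also have "\<dots> = (\<Sum>i\<in>(\<lambda>k. ptr k r) ` J. hw K (port r i))"
  proof (rule sum.reindex[symmetric, unfolded comp_def])
    have lt: "ptr k r < ptr k' r" if "k \<in> J" "k < k'" for k k'
    proof -
      have "ptr (Suc k) r = ptr k r + 1" using that ptr_Suc[OF assms, of k] by (simp add: J_def)
      moreover have "ptr (Suc k) r \<le> ptr k' r" using ptr_mono[OF assms] that by simp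
      ultimately show ?thesis by simp
    qed
    show "inj_on (\<lambda>k. ptr k r) J"
      by (rule inj_onI) (metis lt less_irrefl linorder_neqE_nat)
  qed
  also have "\<dots> \<le> (\<Sum>i<dg r. hw K (port r i))"
  proof (rule sum_mono2)
    show "(\<lambda>k. ptr k r) ` J \<subseteq> {..<dg r}" by (auto simp: J_def)
    show "\<And>i. i \<in> {..<dg r} - (\<lambda>k. ptr k r) ` J \<Longrightarrow> 0 \<le> hw K (port r i)"
      using hw_nonneg red_port[OF assms] by auto
  qed simp
  finally show ?thesis .
qed

lemma sum_ports: "(\<Sum>r\<in>R. \<Sum>i<dg r. hw K (port r i)) \<le> real \<Delta> * (\<Sum>b\<in>Bl. hw K b)"
proof -
  have "(\<Sum>r\<in>R. \<Sum>i<dg r. hw K (port r i)) = (\<Sum>r\<in>R. \<Sum>b\<in>nbrs E r. hw K b)"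
  proof (rule sum.cong[OF refl])
    fix r assume "r \<in> R"
    then have "r \<in> V" using RV by auto
    then show "(\<Sum>i<dg r. hw K (port r i)) = (\<Sum>b\<in>nbrs E r. hw K b)"
      by (rule sum.reindex_bij_betw[OF port_bij])
  qed
  also have "\<dots> = (\<Sum>r\<in>R. \<Sum>b\<in>{b. b \<in> Bl \<and> b \<in> nbrs E r}. hw K b)"
    by (rule sum.cong[OF refl], rule sum.cong) (use nbrD in auto)
  also have "\<dots> = (\<Sum>b\<in>Bl. \<Sum>r\<in>{r. r \<in> R \<and> b \<in> nbrs E r}. hw K b)"
    by (rule sum.swap_restrict[OF finR finBl])
  also have "\<dots> = (\<Sum>b\<in>Bl. real (dg b) * hw K b)"
  proof (rule sum.cong[OF refl])
    fix b assume b: "b \<in> Bl"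
    have "{r. r \<in> R \<and> b \<in> nbrs E r} = nbrs E b" using nbrD nbrs_sym b by blast
    then show "(\<Sum>r\<in>{r. r \<in> R \<and> b \<in> nbrs E r}. hw K b) = real (dg b) * hw K b"
      by (simp add: deg_def)
  qed
  also have "\<dots> \<le> (\<Sum>b\<in>Bl. real \<Delta> * hw K b)"
    by (rule sum_mono, rule mult_right_mono) (use degb hw_nonneg in auto)
  also have "\<dots> = real \<Delta> * (\<Sum>b\<in>Bl. hw K b)" by (simp add: sum_distrib_left)
  finally show ?thesis .
qed

end


context setting begin

lemma sum_Mstar: assumes M: "is_matching E Ms"
  shows "sum w Ms \<le> (\<Sum>r\<in>R. Aw (Suc k) r) + (\<Sum>b\<in>Bl. hw (Suc k) b) + (\<Sum>r\<in>R. bad k r)"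
proof -
  define Pm where "Pm = {(r,b). r \<in> R \<and> b \<in> Bl \<and> {r,b} \<in> Ms}"
  have ME: "Ms \<subseteq> E" and Md: "\<And>e e'. e \<in> Ms \<Longrightarrow> e' \<in> Ms \<Longrightarrow> e \<noteq> e' \<Longrightarrow> e \<inter> e' = {}"
    using M unfolding is_matching_def by auto
  have finPm: "finite Pm" by (rule finite_subset[of _ "R \<times> Bl"]) (auto simp: Pm_def finR finBl)
  have img: "(\<lambda>(r,b). {r,b}) ` Pm = Ms"
  proof
    show "(\<lambda>(r,b). {r,b}) ` Pm \<subseteq> Ms" by (auto simp: Pm_def)
    show "Ms \<subseteq> (\<lambda>(r,b). {r,b}) ` Pm"
    proof
      fix e assume e: "e \<in> Ms"
      then obtain r b where "e = {r,b}" "r \<in> R" "b \<in> V" "b \<notin> R" using edgeD ME by blast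
      then show "e \<in> (\<lambda>(r,b). {r,b}) ` Pm" using e by (auto simp: Pm_def image_iff)
    qed
  qed
  have inj: "inj_on (\<lambda>(r,b). {r,b}) Pm"
    by (rule inj_onI) (auto simp: Pm_def doubleton_eq_iff)
  have injf: "inj_on fst Pm"
  proof (rule inj_onI)
    fix x y assume x: "x \<in> Pm" and y: "y \<in> Pm" and eq: "fst x = fst y"
    obtain r b b' where xy: "x = (r,b)" "y = (r,b')" using eq by (cases x, cases y) auto
    have "{r,b} \<in> Ms" "{r,b'} \<in> Ms" using x y xy by (auto simp: Pm_def)
    then have "{r,b} = {r,b'}" using Md by blast
    then show "x = y" using xy by (auto simp: doubleton_eq_iff)
  qed
  have injs: "inj_on snd Pm"
  proof (rule inj_onI)
    fix x y assume x: "x \<in> Pm" and y: "y \<in> Pm" and eq: "snd x = snd y"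
    obtain r r' b where xy: "x = (r,b)" "y = (r',b)" using eq by (cases x, cases y) auto
    have "{r,b} \<in> Ms" "{r',b} \<in> Ms" using x y xy by (auto simp: Pm_def)
    then have "{r,b} = {r',b}" using Md by blast
    then show "x = y" using xy by (auto simp: doubleton_eq_iff)
  qed
  have "sum w Ms = (\<Sum>p\<in>Pm. w ((\<lambda>(r,b). {r,b}) p))"
    using sum.reindex[OF inj, of w] img by (simp add: comp_def)
  also have "\<dots> \<le> (\<Sum>p\<in>Pm. Aw (Suc k) (fst p) + hw (Suc k) (snd p) + bad k (fst p))"
  proof (rule sum_mono)
    fix p assume p: "p \<in> Pm"
    then obtain r b where pr: "p = (r,b)" "r \<in> R" "b \<in> Bl" "{r,b} \<in> E" using ME by (auto simp: Pm_def)
    then have "b \<in> nbrs E r" by (simp add: nbrs_def insert_commute)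
    then show "w ((\<lambda>(r,b). {r,b}) p) \<le> Aw (Suc k) (fst p) + hw (Suc k) (snd p) + bad k (fst p)"
      using edge_bound[OF pr(2)] pr by simp
  qed
  also have "\<dots> = (\<Sum>p\<in>Pm. Aw (Suc k) (fst p)) + (\<Sum>p\<in>Pm. hw (Suc k) (snd p)) + (\<Sum>p\<in>Pm. bad k (fst p))"
    by (simp add: sum.distrib)
  also have "(\<Sum>p\<in>Pm. Aw (Suc k) (fst p)) \<le> (\<Sum>r\<in>R. Aw (Suc k) r)"
  proof -
    have "(\<Sum>p\<in>Pm. Aw (Suc k) (fst p)) = (\<Sum>r\<in>fst ` Pm. Aw (Suc k) r)" using sum.reindex[OF injf, of "Aw (Suc k)"] by (simp add: comp_def)
    also have "\<dots> \<le> (\<Sum>r\<in>R. Aw (Suc k) r)"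
      by (rule sum_mono2[OF finR]) (auto simp: Pm_def Aw_nonneg)
    finally show ?thesis .
  qed
  also have "(\<Sum>p\<in>Pm. bad k (fst p)) \<le> (\<Sum>r\<in>R. bad k r)"
  proof -
    have "(\<Sum>p\<in>Pm. bad k (fst p)) = (\<Sum>r\<in>fst ` Pm. bad k r)" using sum.reindex[OF injf, of "bad k"] by (simp add: comp_def)
    also have "\<dots> \<le> (\<Sum>r\<in>R. bad k r)"
      by (rule sum_mono2[OF finR]) (auto simp: Pm_def bad_nonneg)
    finally show ?thesis .
  qed
  also have "(\<Sum>p\<in>Pm. hw (Suc k) (snd p)) \<le> (\<Sum>b\<in>Bl. hw (Suc k) b)"
  proof -
    have "(\<Sum>p\<in>Pm. hw (Suc k) (snd p)) = (\<Sum>b\<in>snd ` Pm. hw (Suc k) b)" using sum.reindex[OF injs, of "hw (Suc k)"] by (simp add: comp_def)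
    also have "\<dots> \<le> (\<Sum>b\<in>Bl. hw (Suc k) b)"
      by (rule sum_mono2[OF finBl]) (auto simp: Pm_def hw_nonneg)
    finally show ?thesis .
  qed
  finally show ?thesis by simp
qed

lemma main_bound: assumes M: "is_matching E Ms"
  shows "real K * sum w Ms \<le> (2 * real K + real \<Delta>) * (\<Sum>b\<in>Bl. hw K b)"
proof -
  let ?S = "\<Sum>b\<in>Bl. hw K b"
  have "real K * sum w Ms = (\<Sum>k<K. sum w Ms)" by simp
  also have "\<dots> \<le> (\<Sum>k<K. 2 * ?S + (\<Sum>r\<in>R. bad k r))"
  proof (rule sum_mono)
    fix k assume k: "k \<in> {..<K}"
    have "(\<Sum>b\<in>Bl. hw (Suc k) b) \<le> ?S" by (rule sum_mono) (use hw_mono k in auto)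
    then show "sum w Ms \<le> 2 * ?S + (\<Sum>r\<in>R. bad k r)"
      using sum_Mstar[OF M, of k] sum_Aw[of "Suc k"] by linarith
  qed
  also have "\<dots> = 2 * real K * ?S + (\<Sum>r\<in>R. \<Sum>k<K. bad k r)"
    by (simp add: sum.distrib sum.swap[of _ "{..<K}" R])
  also have "(\<Sum>r\<in>R. \<Sum>k<K. bad k r) \<le> (\<Sum>r\<in>R. \<Sum>i<dg r. hw K (port r i))"
    by (rule sum_mono) (rule sum_bad)
  also have "\<dots> \<le> real \<Delta> * ?S" by (rule sum_ports)
  finally show ?thesis by (simp add: algebra_simps)
qed

lemma out_red: "r \<in> R \<Longrightarrow> mout (st (2*K) r) = (if held K r then Some (ptr K r) else None)"
  using col_par[of r "2*K"] RV by (auto simp: mout_def held_def ptr_def)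

lemma out_blue: "b \<in> V \<Longrightarrow> b \<notin> R \<Longrightarrow> mout (st (2*K) b) = (if hx K b = 0 then None else Some (hx K b - 1))"
  using col_par[of b "2*K"] by (auto simp: mout_def hx_def)

lemma OM_eq: "output_matching Alg V R E port (2*K) = (\<lambda>b. {b, port b (hx K b - 1)}) ` {b\<in>Bl. hx K b \<noteq> 0}"
proof -
  have "output_matching Alg V R E port (2*K) = {{v, port v i} | v i. v \<in> V \<and> mout (st (2*K) v) = Some i}"
    by (simp add: output_matching_def)
  also have "\<dots> = (\<lambda>b. {b, port b (hx K b - 1)}) ` {b\<in>Bl. hx K b \<noteq> 0}"
  proof
    show "{{v, port v i} | v i. v \<in> V \<and> mout (st (2*K) v) = Some i} \<subseteq> (\<lambda>b. {b, port b (hx K b - 1)}) ` {b\<in>Bl. hx K b \<noteq> 0}"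
    proof
      fix e assume "e \<in> {{v, port v i} | v i. v \<in> V \<and> mout (st (2*K) v) = Some i}"
      then obtain v i where e: "e = {v, port v i}" "v \<in> V" "mout (st (2*K) v) = Some i" by blast
      show "e \<in> (\<lambda>b. {b, port b (hx K b - 1)}) ` {b\<in>Bl. hx K b \<noteq> 0}"
      proof (cases "v \<in> R")
        case True
        then have hi: "held K v" "i = ptr K v" using out_red e by (auto split: if_splits)
        define b where "b = port v i"
        have hp: "i < dg v" "hx K b = Suc (bp b v)" using held_ptr[OF True hi(1)] hi b_def by auto
        have bV: "b \<in> V" "b \<notin> R" "v \<in> nbrs E b" using red_port[OF True hp(1)] b_def by auto
        have "port b (hx K b - 1) = v" using hp bp_nbr[OF bV(1) bV(3)] by simp
        then have "e = {b, port b (hx K b - 1)}" using e b_def by auto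
        then show ?thesis using bV hp by auto
      next
        case False
        then have "hx K v = Suc i" using out_blue e by (auto split: if_splits)
        then show ?thesis using e False by (auto simp: image_iff)
      qed
    qed
    show "(\<lambda>b. {b, port b (hx K b - 1)}) ` {b\<in>Bl. hx K b \<noteq> 0} \<subseteq> {{v, port v i} | v i. v \<in> V \<and> mout (st (2*K) v) = Some i}"
      using out_blue by fastforce
  qed
  finally show ?thesis .
qed

lemma blue_edge: assumes "b \<in> Bl" "hx K b \<noteq> 0"
  shows "hx K b - 1 < dg b \<and> port b (hx K b - 1) \<in> R \<and> held K (port b (hx K b - 1)) \<and>
    port (port b (hx K b - 1)) (ptr K (port b (hx K b - 1))) = b"
proof -
  obtain i where i: "hx K b = Suc i" using assms(2) not0_implies_Suc by blast
  have h: "i < dg b" "held K (port b i)" "ptr K (port b i) = bp (port b i) b" using hold_inv i assms by auto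
  have u: "port b i \<in> R" "b \<in> nbrs E (port b i)" using blue_port h assms by auto
  have "port (port b i) (bp (port b i) b) = b" using bp_nbr u RV by auto
  then show ?thesis using h u i by simp
qed

lemma OM_sum: "sum w (output_matching Alg V R E port (2*K)) = (\<Sum>b\<in>Bl. hw K b)"
proof -
  let ?f = "\<lambda>b. {b, port b (hx K b - 1)}"
  let ?B = "{b\<in>Bl. hx K b \<noteq> 0}"
  have inj: "inj_on ?f ?B"
  proof (rule inj_onI)
    fix b1 b2 assume b1: "b1 \<in> ?B" and b2: "b2 \<in> ?B" and eq: "?f b1 = ?f b2"
    have "port b2 (hx K b2 - 1) \<in> R" using blue_edge b2 by auto
    then show "b1 = b2" using eq b1 by (auto simp: doubleton_eq_iff)
  qed
  have "sum w (output_matching Alg V R E port (2*K)) = (\<Sum>b\<in>?B. w (?f b))"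
    unfolding OM_eq using sum.reindex[OF inj, of w] by (simp add: comp_def)
  also have "\<dots> = (\<Sum>b\<in>?B. hw K b)"
    by (rule sum.cong[OF refl]) (auto simp: hw_def split: nat.split)
  also have "\<dots> = (\<Sum>b\<in>Bl. hw K b)"
    by (rule sum.mono_neutral_left) (auto simp: finBl hw_def split: nat.splits)
  finally show ?thesis .
qed

lemma OM_matching: "is_matching E (output_matching Alg V R E port (2*K))"
  unfolding is_matching_def OM_eq
proof (intro conjI ballI impI)
  show "(\<lambda>b. {b, port b (hx K b - 1)}) ` {b\<in>Bl. hx K b \<noteq> 0} \<subseteq> E"
    using blue_edge port_edge by auto
next
  fix e e' assume e: "e \<in> (\<lambda>b. {b, port b (hx K b - 1)}) ` {b\<in>Bl. hx K b \<noteq> 0}"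
    and e': "e' \<in> (\<lambda>b. {b, port b (hx K b - 1)}) ` {b\<in>Bl. hx K b \<noteq> 0}" and ne: "e \<noteq> e'"
  obtain b1 where b1: "b1 \<in> Bl" "hx K b1 \<noteq> 0" "e = {b1, port b1 (hx K b1 - 1)}" using e by auto
  obtain b2 where b2: "b2 \<in> Bl" "hx K b2 \<noteq> 0" "e' = {b2, port b2 (hx K b2 - 1)}" using e' by auto
  have n: "b1 \<noteq> b2" using b1 b2 ne by auto
  have u1: "port b1 (hx K b1 - 1) \<in> R" "port (port b1 (hx K b1 - 1)) (ptr K (port b1 (hx K b1 - 1))) = b1"
    using blue_edge[OF b1(1,2)] by auto
  have u2: "port b2 (hx K b2 - 1) \<in> R" "port (port b2 (hx K b2 - 1)) (ptr K (port b2 (hx K b2 - 1))) = b2"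
    using blue_edge[OF b2(1,2)] by auto
  have "port b1 (hx K b1 - 1) \<noteq> port b2 (hx K b2 - 1)" using u1(2) u2(2) n by metis
  then show "e \<inter> e' = {}" using b1 b2 u1(1) u2(1) n by auto
qed

lemma OM_consistent: "consistent_output Alg V R E port (2*K)"
  unfolding consistent_output_def Alg_simps
proof (intro ballI allI impI)
  fix v i assume v: "v \<in> V" and o: "mout (st (2*K) v) = Some i"
  show "i < dg v \<and> mout (st (2*K) (port v i)) = Some (bp (port v i) v)"
  proof (cases "v \<in> R")
    case True
    then have hi: "held K v" "i = ptr K v" using out_red o by (auto split: if_splits)
    have hp: "i < dg v" "hx K (port v i) = Suc (bp (port v i) v)" using held_ptr[OF True hi(1)] hi by auto
    have "port v i \<in> V" "port v i \<notin> R" using red_port[OF True hp(1)] by auto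
    then show ?thesis using out_blue hp by simp
  next
    case False
    then have hxi: "hx K v = Suc i" using out_blue o v by (auto split: if_splits)
    have h: "i < dg v" "held K (port v i)" "ptr K (port v i) = bp (port v i) v" using hold_inv[OF v False hxi] by auto
    have "port v i \<in> R" using blue_port[OF v False h(1)] by simp
    then show ?thesis using out_red h by simp
  qed
qed

end

theorem theorem2:
  fixes \<epsilon> :: real and \<Delta> :: nat
  assumes "\<epsilon> > 0" and "\<Delta> \<ge> 1"
  shows "\<exists>(A :: (nat, nat) dist_alg) (T :: nat). real T \<le> 4 + 2 * real \<Delta> / \<epsilon> \<and>
    (\<forall>V R E (w :: nat set \<Rightarrow> real) port.
       bicoloured_graph V R E \<and> (\<forall>v\<in>V. deg E v \<le> \<Delta>) \<and> (\<forall>e\<in>E. w e > 0) \<and>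
       valid_ports V E w port \<longrightarrow>
         consistent_output A V R E port T \<and>
         is_matching E (output_matching A V R E port T) \<and>
         (\<forall>Mstar. max_weight_matching E w Mstar \<longrightarrow>
            sum w Mstar \<le> (2 + \<epsilon>) * sum w (output_matching A V R E port T)))"
proof -
  define K where "K = nat \<lceil>real \<Delta> / \<epsilon>\<rceil>"
  have pos: "real \<Delta> / \<epsilon> > 0" using assms by simp
  have K1: "real \<Delta> / \<epsilon> \<le> real K" unfolding K_def by (rule real_nat_ceiling_ge)
  have K2: "real K < real \<Delta> / \<epsilon> + 1" unfolding K_def using pos by linarith
  have Kpos: "real K > 0" using K1 pos by linarith
  have DK: "real \<Delta> \<le> \<epsilon> * real K" using K1 assms(1) by (simp add: divide_le_eq mult.commute)
  have T: "real (2*K) \<le> 4 + 2 * real \<Delta> / \<epsilon>" using K2 by simp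
  show ?thesis
  proof (intro exI[of _ Alg] exI[of _ "2*K"] conjI allI impI, fact T)
    fix V R E w port
    assume H: "bicoloured_graph V R E \<and> (\<forall>v\<in>V. deg E v \<le> \<Delta>) \<and> (\<forall>e\<in>E. w e > 0) \<and> valid_ports V E w port"
    then interpret S: setting V R E w port \<Delta> by unfold_locales auto
    show "consistent_output Alg V R E port (2*K)" by (rule S.OM_consistent)
    show "is_matching E (output_matching Alg V R E port (2*K))" by (rule S.OM_matching)
    fix Mstar assume "max_weight_matching E w Mstar"
    then have M: "is_matching E Mstar" by (simp add: max_weight_matching_def)
    let ?S = "\<Sum>b\<in>V - R. S.hw K b"
    have S0: "0 \<le> ?S" by (rule sum_nonneg) (use S.hw_nonneg in auto)
    have "real K * sum w Mstar \<le> (2 * real K + real \<Delta>) * ?S" by (rule S.main_bound[OF M])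
    also have "\<dots> \<le> (2 * real K + \<epsilon> * real K) * ?S" using DK S0 by (intro mult_right_mono) auto
    also have "\<dots> = real K * ((2 + \<epsilon>) * ?S)" by (simp add: algebra_simps)
    finally have "sum w Mstar \<le> (2 + \<epsilon>) * ?S" using Kpos by simp
    then show "sum w Mstar \<le> (2 + \<epsilon>) * sum w (output_matching Alg V R E port (2*K))"
      using S.OM_sum by simp
  qed
qed

end
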